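(* A finite simple graph $G$ belongs to $\mathcal{C}_3$ if and only if $\chi_c(G)<2$.
   Context: A circular ordering of a finite set is obtained by placing its elements at distinct points of a circle; formally, the set of triples $(x,y,z)$ of distinct elements such that clockwise from $x$ one meets $y$ before $z$. A homomorphism $(H,C_H)\to(G,C_G)$ of circularly ordered graphs is a map on vertices preserving edges such that $(f(x),f(y),f(z))\in C_G$ whenever $(x,y,z)\in C_H$ and $f(x),f(y),f(z)$ are pairwise distinct. $SP_3$ is the path $v_1v_2v_3$ with its (unique) circular ordering placing $v_1,v_2,v_3$ clockwise. $\mathcal{C}_3$ is the class of graphs $G$ admitting a circular ordering $C$ of $V(G)$ with no homomorphism from $SP_3$ to $(G,C)$. For integers $1\le q\le p$, $K_{p/q}$ is the graph on $\{0,\dots,p-1\}$ with $ij$ an edge iff $\min(|i-j|,p-|i-j|)\ge q$; $\chi_c(G)=\min\{p/q: G\to K_{p/q}\}$. *)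

theory Defs
  imports Complex_Main
begin

definition fin_simple_graph :: "'a set \<Rightarrow> ('a \<Rightarrow> 'a \<Rightarrow> bool) \<Rightarrow> bool" where
  "fin_simple_graph V E \<longleftrightarrow> finite V \<and> (\<forall>x y. E x y \<longrightarrow> x \<in> V \<and> y \<in> V)
     \<and> (\<forall>x y. E x y \<longrightarrow> E y x) \<and> (\<forall>x. \<not> E x x)"

definition cyc :: "real \<Rightarrow> real \<Rightarrow> real \<Rightarrow> bool" where
  "cyc a b c \<longleftrightarrow> (a < b \<and> b < c) \<or> (b < c \<and> c < a) \<or> (c < a \<and> a < b)"

text \<open>The circular ordering induced by placing the vertices at distinct points
  (positions f) of a circle: triples of distinct elements met clockwise in this order.\<close>
definition circ_order_of :: "'a set \<Rightarrow> ('a \<Rightarrow> real) \<Rightarrow> ('a \<times> 'a \<times> 'a) set" where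
  "circ_order_of V f = {(x, y, z). x \<in> V \<and> y \<in> V \<and> z \<in> V \<and>
      x \<noteq> y \<and> y \<noteq> z \<and> x \<noteq> z \<and> cyc (f x) (f y) (f z)}"

definition is_circ_order :: "'a set \<Rightarrow> ('a \<times> 'a \<times> 'a) set \<Rightarrow> bool" where
  "is_circ_order V C \<longleftrightarrow> (\<exists>f. inj_on f V \<and> C = circ_order_of V f)"

definition co_hom ::
  "'a set \<Rightarrow> ('a \<Rightarrow> 'a \<Rightarrow> bool) \<Rightarrow> ('a \<times> 'a \<times> 'a) set \<Rightarrow>
   'b set \<Rightarrow> ('b \<Rightarrow> 'b \<Rightarrow> bool) \<Rightarrow> ('b \<times> 'b \<times> 'b) set \<Rightarrow> ('a \<Rightarrow> 'b) \<Rightarrow> bool" where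
  "co_hom VH EH CH VG EG CG f \<longleftrightarrow>
     (\<forall>x\<in>VH. f x \<in> VG) \<and> (\<forall>x y. EH x y \<longrightarrow> EG (f x) (f y)) \<and>
     (\<forall>x y z. (x, y, z) \<in> CH \<longrightarrow> f x \<noteq> f y \<longrightarrow> f y \<noteq> f z \<longrightarrow> f x \<noteq> f z \<longrightarrow>
        (f x, f y, f z) \<in> CG)"

definition SP3_V :: "nat set" where "SP3_V = {1, 2, 3}"
definition SP3_E :: "nat \<Rightarrow> nat \<Rightarrow> bool" where
  "SP3_E x y \<longleftrightarrow> {x, y} = {1, 2} \<or> {x, y} = {2, 3}"
definition SP3_C :: "(nat \<times> nat \<times> nat) set" where
  "SP3_C = circ_order_of SP3_V real"

definition in_C3 :: "'a set \<Rightarrow> ('a \<Rightarrow> 'a \<Rightarrow> bool) \<Rightarrow> bool" where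
  "in_C3 V E \<longleftrightarrow> (\<exists>C. is_circ_order V C \<and>
      \<not> (\<exists>f. co_hom SP3_V SP3_E SP3_C V E C f))"

definition graph_hom :: "'a set \<Rightarrow> ('a \<Rightarrow> 'a \<Rightarrow> bool) \<Rightarrow> 'b set \<Rightarrow> ('b \<Rightarrow> 'b \<Rightarrow> bool) \<Rightarrow> ('a \<Rightarrow> 'b) \<Rightarrow> bool" where
  "graph_hom VH EH VG EG f \<longleftrightarrow> (\<forall>x\<in>VH. f x \<in> VG) \<and> (\<forall>x y. EH x y \<longrightarrow> EG (f x) (f y))"

definition Kpq_V :: "nat \<Rightarrow> nat set" where "Kpq_V p = {0..<p}"
definition Kpq_E :: "nat \<Rightarrow> nat \<Rightarrow> nat \<Rightarrow> nat \<Rightarrow> bool" where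
  "Kpq_E p q i j \<longleftrightarrow> i \<in> {0..<p} \<and> j \<in> {0..<p} \<and>
     min (nat \<bar>int i - int j\<bar>) (p - nat \<bar>int i - int j\<bar>) \<ge> q"

text \<open>Circular chromatic number: the minimum (here: infimum) of p/q over G \<rightarrow> K_{p/q}.\<close>
definition chi_c :: "'a set \<Rightarrow> ('a \<Rightarrow> 'a \<Rightarrow> bool) \<Rightarrow> real" where
  "chi_c V E = Inf {real p / real q | p q. 1 \<le> q \<and> q \<le> p \<and>
      (\<exists>f. graph_hom V E (Kpq_V p) (Kpq_E p q) f)}"

end

theory Submission
  imports Defs
begin

lemma C3_iff:
  assumes "fin_simple_graph V E"
  shows "in_C3 V E \<longleftrightarrow> (\<forall>x y. \<not> E x y)"
proof
  assume h: "in_C3 V E"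
  show "\<forall>x y. \<not> E x y"
  proof (intro allI notI)
    fix u v assume e: "E u v"
    have uv: "u \<in> V" "v \<in> V" using e assms unfolding fin_simple_graph_def by auto
    have evu: "E v u" using e assms unfolding fin_simple_graph_def by auto
    from h obtain C where "\<not> (\<exists>f. co_hom SP3_V SP3_E SP3_C V E C f)"
      unfolding in_C3_def by auto
    moreover have "co_hom SP3_V SP3_E SP3_C V E C (\<lambda>i. if i = 2 then v else u)"
      unfolding co_hom_def
    proof (intro conjI allI impI ballI)
      fix x show "(if x = 2 then v else u) \<in> V" using uv by simp
    next
      fix x y :: nat assume "SP3_E x y"
      then have "(x = 1 \<and> y = 2) \<or> (x = 2 \<and> y = 1) \<or> (x = 2 \<and> y = 3) \<or> (x = 3 \<and> y = 2)"
        unfolding SP3_E_def doubleton_eq_iff by blast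
      then show "E (if x = 2 then v else u) (if y = 2 then v else u)" using e evu by auto
    next
      fix x y z :: nat
      assume "(if x = 2 then v else u) \<noteq> (if y = 2 then v else u)"
        "(if y = 2 then v else u) \<noteq> (if z = 2 then v else u)"
        "(if x = 2 then v else u) \<noteq> (if z = 2 then v else u)"
      then have False by (auto split: if_splits)
      then show "((if x = 2 then v else u), (if y = 2 then v else u), (if z = 2 then v else u)) \<in> C" by simp
    qed
    ultimately show False by blast
  qed
next
  assume ne: "\<forall>x y. \<not> E x y"
  have "finite V" using assms unfolding fin_simple_graph_def by auto
  then obtain g :: "'a \<Rightarrow> nat" and n where "inj_on g V"
    using finite_imp_inj_to_nat_seg by blast
  then have "inj_on (real \<circ> g) V" by (simp add: inj_on_def)
  then have "is_circ_order V (circ_order_of V (real \<circ> g))"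
    unfolding is_circ_order_def by blast
  moreover have "\<not> (\<exists>f. co_hom SP3_V SP3_E SP3_C V E C f)" for C
  proof
    assume "\<exists>f. co_hom SP3_V SP3_E SP3_C V E C f"
    then obtain f where "\<forall>x y. SP3_E x y \<longrightarrow> E (f x) (f y)" unfolding co_hom_def by blast
    moreover have "SP3_E 1 2" unfolding SP3_E_def by simp
    ultimately show False using ne by blast
  qed
  ultimately show "in_C3 V E" unfolding in_C3_def by blast
qed

lemma chi_iff:
  assumes "fin_simple_graph V E"
  shows "chi_c V E < 2 \<longleftrightarrow> (\<forall>x y. \<not> E x y)"
proof
  assume ne: "\<forall>x y. \<not> E x y"
  let ?S = "{real p / real q | p q. 1 \<le> q \<and> q \<le> p \<and>
      (\<exists>f. graph_hom V E (Kpq_V p) (Kpq_E p q) f)}"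
  have "graph_hom V E (Kpq_V 1) (Kpq_E 1 1) (\<lambda>_. 0)"
    unfolding graph_hom_def Kpq_V_def using ne by auto
  then have "real 1 / real 1 \<in> ?S" by blast
  moreover have "bdd_below ?S" by (rule bdd_belowI[of _ 0]) auto
  ultimately have "chi_c V E \<le> real 1 / real 1" unfolding chi_c_def
    by (rule cInf_lower)
  then show "chi_c V E < 2" by simp
next
  assume lt: "chi_c V E < 2"
  show "\<forall>x y. \<not> E x y"
  proof (intro allI notI)
    fix u v assume e: "E u v"
    let ?S = "{real p / real q | p q. 1 \<le> q \<and> q \<le> p \<and>
      (\<exists>f. graph_hom V E (Kpq_V p) (Kpq_E p q) f)}"
    have fin: "finite V" and uv: "u \<in> V" "v \<in> V"
      and irr: "\<forall>x. \<not> E x x" and cl: "\<forall>x y. E x y \<longrightarrow> x \<in> V \<and> y \<in> V"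
      using e assms unfolding fin_simple_graph_def by auto
    obtain g :: "'a \<Rightarrow> nat" and n where gi: "g ` V = {i. i < n}" "inj_on g V"
      using finite_imp_inj_to_nat_seg[OF fin] by blast
    have n1: "1 \<le> n" 
    proof -
      have "g u \<in> g ` V" using uv by blast
      then have "g u < n" using gi by simp
      then show ?thesis by simp
    qed
    have "graph_hom V E (Kpq_V n) (Kpq_E n 1) g"
      unfolding graph_hom_def Kpq_V_def Kpq_E_def
    proof (intro conjI allI impI ballI)
      fix x assume "x \<in> V" then show "g x \<in> {0..<n}" using gi by auto
    next
      fix x y assume exy: "E x y"
      have xy: "x \<in> V" "y \<in> V" "x \<noteq> y" using exy cl irr by auto
      then have gx: "g x < n" "g y < n" "g x \<noteq> g y" using gi by (auto simp: inj_on_def)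
      then show "g x \<in> {0..<n}" "g y \<in> {0..<n}" by auto
      show "1 \<le> min (nat \<bar>int (g x) - int (g y)\<bar>) (n - nat \<bar>int (g x) - int (g y)\<bar>)"
      proof -
        have a: "1 \<le> nat \<bar>int (g x) - int (g y)\<bar>" using gx by arith
        have b: "nat \<bar>int (g x) - int (g y)\<bar> < n" using gx by arith
        show ?thesis using a b by simp
      qed
    qed
    then have ne: "?S \<noteq> {}" using n1 by blast
    have "\<forall>s\<in>?S. 2 \<le> s"
    proof
      fix s assume "s \<in> ?S"
      then obtain p q f where s: "s = real p / real q" "1 \<le> q" "q \<le> p"
        "graph_hom V E (Kpq_V p) (Kpq_E p q) f" by blast
      then have "Kpq_E p q (f u) (f v)" using e unfolding graph_hom_def by auto
      then have "q \<le> nat \<bar>int (f u) - int (f v)\<bar>" "q \<le> p - nat \<bar>int (f u) - int (f v)\<bar>"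
        unfolding Kpq_E_def by simp_all
      then have "2 * q \<le> p" using s(2) by simp
      then have "2 * real q \<le> real p" by (metis of_nat_le_iff of_nat_mult of_nat_numeral)
      moreover have "real q > 0" using s(2) by simp
      ultimately show "2 \<le> s" using s(1) by (simp add: pos_le_divide_eq)
    qed
    then have "2 \<le> chi_c V E" unfolding chi_c_def using ne by (intro cInf_greatest) auto
    then show False using lt by simp
  qed
qed

theorem mainTheorem15:
  fixes V :: "'a set" and E :: "'a \<Rightarrow> 'a \<Rightarrow> bool"
  assumes "fin_simple_graph V E"
  shows "in_C3 V E \<longleftrightarrow> chi_c V E < 2"
  using C3_iff[OF assms] chi_iff[OF assms] by simp

end
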